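(* Let $J^r:\mathbb{R}^n\to\mathbb{R}^k$ be continuously differentiable, let $\epsilon\in[0,\infty)^k$, and let $$P_2^r:=\Big\{u\in\mathbb{R}^n:\min_{\alpha\in\Delta_k}\big(\|DJ^r(u)^\top\alpha\|_2^2-(\alpha^\top\epsilon)^2\big)\le 0\Big\}.$$ Then for every $\tilde u\in P_2^r$ there exists a continuously differentiable $\tilde J:\mathbb{R}^n\to\mathbb{R}^k$ with $$\sup_{u\in\mathbb{R}^n}\|\nabla\tilde J_i(u)-\nabla J^r_i(u)\|_2\le\epsilon_i\quad\text{for all } i\in\{1,\dots,k\}$$ such that $\tilde u$ is Pareto critical for $\tilde J$.
   Context: $\Delta_k:=\{\alpha\in[0,\infty)^k:\sum_{i=1}^k\alpha_i=1\}$. $DJ(u)\in\mathbb{R}^{k\times n}$ denotes the Jacobian, so $DJ(u)^\top\alpha=\sum_i\alpha_i\nabla J_i(u)$. A point $\tilde u$ is Pareto critical for $\tilde J$ if there is $\alpha\in\Delta_k$ with $D\tilde J(\tilde u)^\top\alpha=0$. *)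

theory Defs
  imports "HOL-Analysis.Analysis"
begin

definition prob_simplex :: "(real ^ 'k::finite) set" where
  "prob_simplex = {\<alpha>. (\<forall>i. 0 \<le> \<alpha> $ i) \<and> (\<Sum>i\<in>UNIV. \<alpha> $ i) = 1}"

definition C1_with_grads :: "(real ^ 'n::finite \<Rightarrow> real ^ 'k::finite) \<Rightarrow> ('k \<Rightarrow> real ^ 'n \<Rightarrow> real ^ 'n) \<Rightarrow> bool" where
  "C1_with_grads J G \<longleftrightarrow>
     (\<forall>i u. ((\<lambda>v. J v $ i) has_derivative (\<lambda>h. G i u \<bullet> h)) (at u)) \<and>
     (\<forall>i. continuous_on UNIV (G i))"

definition jacT_mult :: "('k::finite \<Rightarrow> real ^ 'n::finite \<Rightarrow> real ^ 'n) \<Rightarrow> real ^ 'n \<Rightarrow> real ^ 'k \<Rightarrow> real ^ 'n" where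
  "jacT_mult G u \<alpha> = (\<Sum>i\<in>UNIV. \<alpha> $ i *\<^sub>R G i u)"

definition pareto_critical :: "('k::finite \<Rightarrow> real ^ 'n::finite \<Rightarrow> real ^ 'n) \<Rightarrow> real ^ 'n \<Rightarrow> bool" where
  "pareto_critical G u \<longleftrightarrow> (\<exists>\<alpha>\<in>prob_simplex. jacT_mult G u \<alpha> = 0)"

definition P2r :: "('k::finite \<Rightarrow> real ^ 'n::finite \<Rightarrow> real ^ 'n) \<Rightarrow> real ^ 'k \<Rightarrow> (real ^ 'n) set" where
  "P2r G \<epsilon> = {u. (INF \<alpha>\<in>prob_simplex. (norm (jacT_mult G u \<alpha>))\<^sup>2 - (\<alpha> \<bullet> \<epsilon>)\<^sup>2) \<le> 0}"

end

theory Submission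
  imports Defs
begin

lemma simplex_compact: "compact (prob_simplex :: (real ^ 'k::finite) set)"
proof -
  have cl: "closed (prob_simplex :: (real ^ 'k) set)"
  proof -
    have "prob_simplex = (\<Inter>i. {\<alpha>::real^'k. 0 \<le> \<alpha> $ i}) \<inter> {\<alpha>. (\<Sum>i\<in>UNIV. \<alpha> $ i) = 1}"
      unfolding prob_simplex_def by auto
    moreover have "closed {\<alpha>::real^'k. (\<Sum>i\<in>UNIV. \<alpha> $ i) = 1}"
      by (intro closed_Collect_eq continuous_intros)
    moreover have "\<And>i. closed {\<alpha>::real^'k. 0 \<le> \<alpha> $ i}"
      by (intro closed_Collect_le continuous_intros)
    ultimately show ?thesis by (metis closed_INT closed_Int)
  qed
  have "bounded (prob_simplex :: (real ^ 'k) set)"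
    unfolding bounded_iff
  proof (intro exI ballI)
    fix x :: "real^'k" assume "x \<in> prob_simplex"
    hence "(\<Sum>i\<in>UNIV. \<bar>x$i\<bar>) = 1" unfolding prob_simplex_def by auto
    thus "norm x \<le> 1" using norm_le_l1_cart[of x] by simp
  qed
  with cl show ?thesis by (simp add: compact_eq_bounded_closed)
qed

lemma simplex_nonempty: "(prob_simplex :: (real ^ 'k::finite) set) \<noteq> {}"
proof -
  have "(\<chi> i. 1 / real CARD('k)) \<in> (prob_simplex :: (real ^ 'k) set)"
    unfolding prob_simplex_def by simp
  thus ?thesis by blast
qed

theorem mainTheorem3:
  fixes Jr :: "real ^ 'n::finite \<Rightarrow> real ^ 'k::finite"
    and Gr :: "'k \<Rightarrow> real ^ 'n \<Rightarrow> real ^ 'n"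
    and \<epsilon> :: "real ^ 'k"
    and ut :: "real ^ 'n"
  assumes "C1_with_grads Jr Gr"
    and "\<forall>i. 0 \<le> \<epsilon> $ i"
    and "ut \<in> P2r Gr \<epsilon>"
  shows "\<exists>(Jt :: real ^ 'n \<Rightarrow> real ^ 'k) (Gt :: 'k \<Rightarrow> real ^ 'n \<Rightarrow> real ^ 'n).
           C1_with_grads Jt Gt \<and>
           (\<forall>i u. norm (Gt i u - Gr i u) \<le> \<epsilon> $ i) \<and>
           pareto_critical Gt ut"
proof -
  define f where "f = (\<lambda>\<alpha>::real^'k. (norm (jacT_mult Gr ut \<alpha>))\<^sup>2 - (\<alpha> \<bullet> \<epsilon>)\<^sup>2)"
  have "continuous_on prob_simplex f"
    unfolding f_def jacT_mult_def by (intro continuous_intros)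
  then obtain a where a: "a \<in> prob_simplex" and amin: "\<forall>y\<in>prob_simplex. f a \<le> f y"
    using continuous_attains_inf[OF simplex_compact simplex_nonempty] by blast
  have "(INF \<alpha>\<in>prob_simplex. f \<alpha>) = f a"
    using a amin by (intro antisym cINF_lower cINF_greatest) (auto intro: bdd_belowI2 simp: simplex_nonempty)
  hence fa: "f a \<le> 0" using assms(3) unfolding P2r_def f_def by simp
  define v where "v = jacT_mult Gr ut a"
  have ae: "0 \<le> a \<bullet> \<epsilon>"
    using a assms(2) unfolding prob_simplex_def inner_vec_def by (auto intro: sum_nonneg)
  have vle: "norm v \<le> a \<bullet> \<epsilon>"
  proof -
    have "(norm v)\<^sup>2 \<le> (a \<bullet> \<epsilon>)\<^sup>2" using fa unfolding f_def v_def by simp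
    thus ?thesis using ae by (meson norm_ge_zero power2_le_imp_le)
  qed
  define t where "t = (if a \<bullet> \<epsilon> = 0 then 0 else 1 / (a \<bullet> \<epsilon>))"
  define d where "d = (\<lambda>i. (\<epsilon> $ i * t) *\<^sub>R v)"
  define Gt where "Gt = (\<lambda>i u. Gr i u - d i)"
  define Jt where "Jt = (\<lambda>u. \<chi> i. Jr u $ i - d i \<bullet> u)"
  have C1: "C1_with_grads Jt Gt"
    unfolding C1_with_grads_def
  proof (intro conjI allI)
    fix i u
    have "((\<lambda>v. Jr v $ i) has_derivative (\<lambda>h. Gr i u \<bullet> h)) (at u)"
      using assms(1) unfolding C1_with_grads_def by blast
    moreover have "((\<lambda>v. d i \<bullet> v) has_derivative (\<lambda>h. d i \<bullet> h)) (at u)"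
      by (intro derivative_intros)
    ultimately have "((\<lambda>v. Jr v $ i - d i \<bullet> v) has_derivative (\<lambda>h. Gr i u \<bullet> h - d i \<bullet> h)) (at u)"
      by (rule has_derivative_diff)
    thus "((\<lambda>v. Jt v $ i) has_derivative (\<lambda>h. Gt i u \<bullet> h)) (at u)"
      unfolding Jt_def Gt_def by (simp add: inner_diff_left)
  next
    fix i
    have "continuous_on UNIV (Gr i)" using assms(1) unfolding C1_with_grads_def by blast
    thus "continuous_on UNIV (Gt i)" unfolding Gt_def by (intro continuous_intros)
  qed
  have bnd: "norm (Gt i u - Gr i u) \<le> \<epsilon> $ i" for i u
  proof (cases "a \<bullet> \<epsilon> = 0")
    case True
    thus ?thesis using assms(2) unfolding Gt_def d_def t_def by simp
  next
    case False
    hence pos: "a \<bullet> \<epsilon> > 0" using ae by simp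
    have "norm (Gt i u - Gr i u) = \<epsilon> $ i * (norm v / (a \<bullet> \<epsilon>))"
      unfolding Gt_def d_def t_def using False assms(2) ae by (simp add: abs_mult)
    also have "\<dots> \<le> \<epsilon> $ i * 1"
      using pos vle assms(2) by (intro mult_left_mono) auto
    finally show ?thesis by simp
  qed
  have "jacT_mult Gt ut a = v - (\<Sum>i\<in>UNIV. a $ i *\<^sub>R d i)"
    unfolding jacT_mult_def Gt_def v_def by (simp add: scaleR_diff_right sum_subtractf)
  also have "(\<Sum>i\<in>UNIV. a $ i *\<^sub>R d i) = ((a \<bullet> \<epsilon>) * t) *\<^sub>R v"
    unfolding d_def inner_vec_def
    by (simp add: scaleR_sum_left[symmetric] sum_distrib_right mult.assoc)
  also have "v - ((a \<bullet> \<epsilon>) * t) *\<^sub>R v = 0"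
  proof (cases "a \<bullet> \<epsilon> = 0")
    case True
    hence "v = 0" using vle by simp
    thus ?thesis by simp
  qed (simp add: t_def)
  finally have "pareto_critical Gt ut" unfolding pareto_critical_def using a by blast
  with C1 bnd show ?thesis by blast
qed

end
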